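(* For each $n\ge 2$, the number of non-periodic diameter-$4$ perfect Lee codes in $Z^n$ is $2^{\aleph_0}$.
   Context: Lee distance on $Z^n$: $\rho_L(v,w)=\sum_i|v_i-w_i|$; $S_{n,1}(v)=\{w:\rho_L(v,w)\le1\}$; for $\rho_L(v,w)=1$ the double-sphere is $DS_{n,1}(v,w)=S_{n,1}(v)\cup S_{n,1}(w)$. A copy of a set is its image under a linear distance-preserving bijection of $Z^n$; a tiling is a family of pairwise disjoint copies covering $Z^n$. A diameter-$4$ perfect Lee code in $Z^n$ is a set $\mathcal{L}$ with pairwise Lee distances $\ge 4$ such that there is a tiling of $Z^n$ by copies of $DS_{n,1}$ in which each tile contains exactly one element of $\mathcal{L}$ and distinct tiles contain distinct elements. A set $\mathcal{S}\subset Z^n$ is periodic if there is $p>0$ with $s\in\mathcal{S}\iff s+pe_i\in\mathcal{S}$ for all $i=1,\dots,n$; otherwise it is non-periodic. *)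

theory Defs
  imports Main "HOL-Library.Equipollence"
begin

text \<open>Points of Z^n are functions from a finite index type 'n (with CARD('n) = n) to int.\<close>

definition lee_dist :: "('n::finite \<Rightarrow> int) \<Rightarrow> ('n \<Rightarrow> int) \<Rightarrow> int" where
  "lee_dist v w = (\<Sum>i\<in>UNIV. \<bar>v i - w i\<bar>)"

definition lee_sphere1 :: "('n::finite \<Rightarrow> int) \<Rightarrow> ('n \<Rightarrow> int) set" where
  "lee_sphere1 v = {w. lee_dist v w \<le> 1}"

definition double_sphere :: "('n::finite \<Rightarrow> int) \<Rightarrow> ('n \<Rightarrow> int) \<Rightarrow> ('n \<Rightarrow> int) set" where
  "double_sphere v w = lee_sphere1 v \<union> lee_sphere1 w"

definition lee_isometry :: "(('n::finite \<Rightarrow> int) \<Rightarrow> ('n \<Rightarrow> int)) \<Rightarrow> bool" where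
  "lee_isometry f \<longleftrightarrow> bij f \<and> (\<forall>v w. lee_dist (f v) (f w) = lee_dist v w)"

definition ds_copy :: "('n::finite \<Rightarrow> int) set \<Rightarrow> bool" where
  "ds_copy T \<longleftrightarrow> (\<exists>f v w. lee_isometry f \<and> lee_dist v w = 1 \<and> T = f ` double_sphere v w)"

definition ds_tiling :: "('n::finite \<Rightarrow> int) set set \<Rightarrow> bool" where
  "ds_tiling \<T> \<longleftrightarrow> (\<forall>T\<in>\<T>. ds_copy T)
     \<and> (\<forall>T1\<in>\<T>. \<forall>T2\<in>\<T>. T1 \<noteq> T2 \<longrightarrow> T1 \<inter> T2 = {})
     \<and> \<Union>\<T> = UNIV"

definition diam4_perfect_lee_code :: "('n::finite \<Rightarrow> int) set \<Rightarrow> bool" where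
  "diam4_perfect_lee_code L \<longleftrightarrow>
     (\<forall>x\<in>L. \<forall>y\<in>L. x \<noteq> y \<longrightarrow> lee_dist x y \<ge> 4)
     \<and> (\<exists>\<T>. ds_tiling \<T>
           \<and> (\<forall>T\<in>\<T>. \<exists>!c. c \<in> L \<and> c \<in> T)
           \<and> (\<forall>T1\<in>\<T>. \<forall>T2\<in>\<T>. \<forall>c1 c2. T1 \<noteq> T2 \<and> c1 \<in> L \<inter> T1 \<and> c2 \<in> L \<inter> T2 \<longrightarrow> c1 \<noteq> c2))"

definition unit_vec :: "'n \<Rightarrow> ('n \<Rightarrow> int)" where
  "unit_vec i = (\<lambda>j. if j = i then 1 else 0)"

definition periodic_set :: "('n::finite \<Rightarrow> int) set \<Rightarrow> bool" where
  "periodic_set S \<longleftrightarrow> (\<exists>p::int. p > 0 \<and>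
     (\<forall>s i. s \<in> S \<longleftrightarrow> (\<lambda>j. s j + p * unit_vec i j) \<in> S))"

end

theory Submission
  imports Defs "HOL-Library.Countable"
begin

locale leeset =
  fixes pos :: "'n::finite \<Rightarrow> nat" and N :: nat
  assumes bij: "bij_betw pos UNIV {0..<N}" and N2: "N \<ge> 2"
begin

definition cc :: "'n \<Rightarrow> int" where "cc i = 2 * int (pos i) + 1"
definition ll :: "'n \<Rightarrow> int" where "ll i = (if even (pos i) then 1 else -1)"
definition dot :: "('n \<Rightarrow> int) \<Rightarrow> int" where "dot x = (\<Sum>i\<in>UNIV. cc i * x i)"
definition ldot :: "('n \<Rightarrow> int) \<Rightarrow> int" where "ldot x = (\<Sum>i\<in>UNIV. ll i * x i)"
definition nrm :: "('n \<Rightarrow> int) \<Rightarrow> int" where "nrm x = (\<Sum>i\<in>UNIV. \<bar>x i\<bar>)"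

lemma pos_lt: "pos i < N" using bij unfolding bij_betw_def by auto
lemma pos_inj: "pos i = pos j \<Longrightarrow> i = j" using bij unfolding bij_betw_def inj_on_def by auto
lemma pos_surj: "p < N \<Longrightarrow> \<exists>i. pos i = p" using bij unfolding bij_betw_def by (metis atLeastLessThan_iff imageE zero_le)

lemma cc_ll_mod: "4 dvd (cc i + ll i - 2)"
proof (cases "even (pos i)")
  case True then obtain k where "pos i = 2*k" by blast
  then show ?thesis using True by (simp add: cc_def ll_def)
next
  case False then obtain k where "pos i = 2*k+1" using oddE by blast
  then show ?thesis using False by (simp add: cc_def ll_def)
qed

lemma lemma_l:
  assumes n3: "nrm z \<le> 3" and d4: "4 dvd dot z"
  shows "ldot z = 0"
proof -
  have a: "4 dvd (dot z + ldot z - 2 * sum z UNIV)"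
  proof -
    have "dot z + ldot z - 2 * sum z UNIV = (\<Sum>i\<in>UNIV. (cc i + ll i - 2) * z i)"
      by (simp add: dot_def ldot_def sum_distrib_left sum_distrib_right algebra_simps sum.distrib sum_subtractf)
    also have "4 dvd \<dots>" by (rule dvd_sum) (simp add: cc_ll_mod)
    finally show ?thesis .
  qed
  have b: "2 dvd (ldot z - sum z UNIV)"
  proof -
    have "ldot z - sum z UNIV = (\<Sum>i\<in>UNIV. (ll i - 1) * z i)"
      by (simp add: ldot_def algebra_simps sum_subtractf)
    also have "2 dvd \<dots>" by (rule dvd_sum) (simp add: ll_def)
    finally show ?thesis .
  qed
  have c: "\<bar>ldot z\<bar> \<le> nrm z"
  proof -
    have "\<bar>ldot z\<bar> \<le> (\<Sum>i\<in>UNIV. \<bar>ll i * z i\<bar>)" unfolding ldot_def by (rule sum_abs)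
    also have "\<dots> = nrm z" unfolding nrm_def by (rule sum.cong) (auto simp: abs_mult ll_def)
    finally show ?thesis .
  qed
  show ?thesis using a b c n3 d4 by presburger
qed

lemma cc_pos: "cc i \<ge> 1" by (simp add: cc_def)
lemma cc_le: "cc i \<le> 2 * int N - 1" using pos_lt[of i] by (simp add: cc_def)

lemma nrm_nonneg: "nrm x \<ge> 0" by (simp add: nrm_def sum_nonneg)

lemma nrm_zero: "nrm x = 0 \<Longrightarrow> x = (\<lambda>_. 0)"
  unfolding nrm_def by (subst (asm) sum_nonneg_eq_0_iff) auto

lemma sum_remove_UNIV: "(\<Sum>j\<in>UNIV. f j) = f i + (\<Sum>j\<in>UNIV-{i}. f j)" for f :: "'n \<Rightarrow> int"
  by (simp add: sum.remove)

lemma lemma_min: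
  assumes lat: "(4 * int N) dvd dot d" and n3: "nrm d \<le> 3"
  shows "d = (\<lambda>_. 0)"
proof (rule ccontr)
  assume nz: "d \<noteq> (\<lambda>_. 0)"
  have par: "2 dvd (dot d - nrm d)"
  proof -
    have "dot d - nrm d = (\<Sum>i\<in>UNIV. (cc i - 1) * d i + (d i - \<bar>d i\<bar>))"
      by (simp add: dot_def nrm_def algebra_simps sum_subtractf sum.distrib)
    also have "2 dvd \<dots>" by (rule dvd_sum) (auto simp: cc_def abs_if)
    finally show ?thesis .
  qed
  have bound: "\<bar>dot d\<bar> \<le> (2 * int N - 1) * nrm d"
  proof -
    have "\<bar>dot d\<bar> \<le> (\<Sum>i\<in>UNIV. \<bar>cc i * d i\<bar>)" unfolding dot_def by (rule sum_abs)
    also have "\<dots> \<le> (\<Sum>i\<in>UNIV. (2 * int N - 1) * \<bar>d i\<bar>)"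
      proof (rule sum_mono)
      fix i have "\<bar>cc i\<bar> = cc i" using cc_pos[of i] by simp
      then show "\<bar>cc i * d i\<bar> \<le> (2 * int N - 1) * \<bar>d i\<bar>" by (simp add: abs_mult mult_right_mono[OF cc_le])
    qed
    also have "\<dots> = (2 * int N - 1) * nrm d" by (simp add: nrm_def sum_distrib_left)
    finally show ?thesis .
  qed
  have "nrm d \<noteq> 0" using nrm_zero nz by blast
  have d4: "4 dvd dot d" using lat by (metis dvd_mult_left mult.commute dvd_trans dvd_triv_left)
  have n2: "nrm d = 2"
    using par n3 nrm_nonneg[of d] \<open>nrm d \<noteq> 0\<close> d4 by presburger
  have "\<bar>dot d\<bar> < 4 * int N" using bound n2 N2 by simp
  then have dot0: "dot d = 0"
  proof -
    assume lt: "\<bar>dot d\<bar> < 4 * int N"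
    show ?thesis
    proof (rule ccontr)
      assume "dot d \<noteq> 0"
      then have "\<bar>4 * int N\<bar> \<le> \<bar>dot d\<bar>" using lat by (rule dvd_imp_le_int)
      then show False using lt by simp
    qed
  qed
  obtain i where di: "d i \<noteq> 0" using nz by auto
  have nsplit: "nrm d = \<bar>d i\<bar> + (\<Sum>j\<in>UNIV-{i}. \<bar>d j\<bar>)"
    unfolding nrm_def by (rule sum_remove_UNIV)
  have dsplit: "dot d = cc i * d i + (\<Sum>j\<in>UNIV-{i}. cc j * d j)"
    unfolding dot_def by (rule sum_remove_UNIV)
  have restnn: "(\<Sum>j\<in>UNIV-{i}. \<bar>d j\<bar>) \<ge> 0" by (simp add: sum_nonneg)
  show False
  proof (cases "\<bar>d i\<bar> = 2")
    case True
    then have "(\<Sum>j\<in>UNIV-{i}. \<bar>d j\<bar>) = 0" using nsplit n2 by simp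
    then have "\<forall>j\<in>UNIV-{i}. d j = 0" by (subst (asm) sum_nonneg_eq_0_iff) auto
    then have "(\<Sum>j\<in>UNIV-{i}. cc j * d j) = 0" by simp
    then have "cc i * d i = 0" using dsplit dot0 by simp
    then show False using di cc_pos[of i] by simp
  next
    case False
    then have di1: "\<bar>d i\<bar> = 1" using nsplit n2 restnn di by linarith
    then have r1: "(\<Sum>j\<in>UNIV-{i}. \<bar>d j\<bar>) = 1" using nsplit n2 by simp
    then obtain j where j: "j \<noteq> i" "d j \<noteq> 0"
      by (metis (no_types, lifting) DiffD1 DiffD2 abs_zero insertCI one_neq_zero sum.neutral)
    have "(\<Sum>k\<in>UNIV-{i}. \<bar>d k\<bar>) = \<bar>d j\<bar> + (\<Sum>k\<in>UNIV-{i}-{j}. \<bar>d k\<bar>)"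
      using j by (simp add: sum.remove)
    moreover have "(\<Sum>k\<in>UNIV-{i}-{j}. \<bar>d k\<bar>) \<ge> 0" by (simp add: sum_nonneg)
    ultimately have dj1: "\<bar>d j\<bar> = 1" and r0: "(\<Sum>k\<in>UNIV-{i}-{j}. \<bar>d k\<bar>) = 0"
      using r1 j by linarith+
    then have "\<forall>k\<in>UNIV-{i}-{j}. d k = 0" by (subst (asm) sum_nonneg_eq_0_iff) auto
    then have z: "(\<Sum>k\<in>UNIV-{i}-{j}. cc k * d k) = 0" by simp
    have "(\<Sum>k\<in>UNIV-{i}. cc k * d k) = cc j * d j + (\<Sum>k\<in>UNIV-{i}-{j}. cc k * d k)"
      using j by (simp add: sum.remove)
    then have "cc i * d i + cc j * d j = 0" using dsplit dot0 z by simp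
    then have "cc i = cc j" using di1 dj1 cc_pos[of i] cc_pos[of j]
      by (auto simp: abs_if split: if_splits)
    then have "pos i = pos j" by (simp add: cc_def)
    then show False using pos_inj j by metis
  qed
qed

definition zv :: "'n \<Rightarrow> int" where "zv = (\<lambda>_. 0)"
definition vadd :: "('n \<Rightarrow> int) \<Rightarrow> ('n \<Rightarrow> int) \<Rightarrow> ('n \<Rightarrow> int)" where "vadd x y = (\<lambda>j. x j + y j)"
definition ee :: "'n \<Rightarrow> 'n \<Rightarrow> int" where "ee i = unit_vec i"
definition i0 :: 'n where "i0 = (SOME i. pos i = 0)"
definition i1 :: 'n where "i1 = (SOME i. pos i = 1)"
definition lat :: "('n \<Rightarrow> int) \<Rightarrow> bool" where "lat x \<longleftrightarrow> (4 * int N) dvd dot x"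
definition Off :: "('n \<Rightarrow> int) set" where "Off = double_sphere zv (ee i0)"
definition tile :: "('n \<Rightarrow> int) \<Rightarrow> ('n \<Rightarrow> int) set" where "tile v = (\<lambda>x. vadd x v) ` Off"
definition del :: "'n \<Rightarrow> int" where "del = vadd (ee i0) (ee i1)"

lemma pos_i0: "pos i0 = 0" unfolding i0_def by (rule someI_ex) (use pos_surj N2 in auto)
lemma pos_i1: "pos i1 = 1" unfolding i1_def by (rule someI_ex) (use pos_surj N2 in auto)
lemma i01: "i0 \<noteq> i1" using pos_i0 pos_i1 by auto

lemma dot_add: "dot (vadd x y) = dot x + dot y"
  by (simp add: dot_def vadd_def distrib_left sum.distrib)
lemma ldot_add: "ldot (vadd x y) = ldot x + ldot y"
  by (simp add: ldot_def vadd_def distrib_left sum.distrib)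
lemma dot_diff: "dot (\<lambda>j. x j - y j) = dot x - dot y"
  by (simp add: dot_def right_diff_distrib sum_subtractf)
lemma ldot_diff: "ldot (\<lambda>j. x j - y j) = ldot x - ldot y"
  by (simp add: ldot_def right_diff_distrib sum_subtractf)
lemma dot_neg: "dot (\<lambda>j. - x j) = - dot x"
  by (simp add: dot_def sum_negf)
lemma dot_ee: "dot (ee i) = cc i"
  by (simp add: dot_def ee_def unit_vec_def if_distrib cong: if_cong)
lemma ldot_ee: "ldot (ee i) = ll i"
  by (simp add: ldot_def ee_def unit_vec_def if_distrib cong: if_cong)
lemma dot_zv: "dot zv = 0" by (simp add: dot_def zv_def)
lemma ldot_zv: "ldot zv = 0" by (simp add: ldot_def zv_def)
lemma dot_del: "dot del = 4" using pos_i0 pos_i1 by (simp add: del_def dot_add dot_ee cc_def)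
lemma ldot_del: "ldot del = 0" using pos_i0 pos_i1 by (simp add: del_def ldot_add ldot_ee ll_def)
lemma del_nz: "del \<noteq> zv"
proof
  assume "del = zv" then have "del i0 = zv i0" by simp
  then show False using i01 by (simp add: del_def vadd_def ee_def unit_vec_def zv_def)
qed

lemma ld_nrm: "lee_dist x y = nrm (\<lambda>j. x j - y j)" by (simp add: lee_dist_def nrm_def)
lemma ld_sym: "lee_dist x y = lee_dist y x" by (simp add: lee_dist_def abs_minus_commute)
lemma ld_tri: "lee_dist x y \<le> lee_dist x z + lee_dist z y"
  unfolding lee_dist_def sum.distrib[symmetric] by (rule sum_mono) simp

lemma sum_uv: "(\<Sum>j\<in>UNIV. \<bar>unit_vec (i::'n) j :: int\<bar>) = 1"
proof -
  have "(\<Sum>j\<in>UNIV. \<bar>unit_vec i j :: int\<bar>) = (\<Sum>j\<in>UNIV. if j = i then 1 else 0)"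
    by (rule sum.cong) (auto simp: unit_vec_def)
  then show ?thesis by simp
qed

lemma in_Off1: "lee_dist zv x \<le> 1 \<Longrightarrow> x \<in> Off"
  by (simp add: Off_def double_sphere_def lee_sphere1_def)
lemma in_Off2: "lee_dist (ee i0) x \<le> 1 \<Longrightarrow> x \<in> Off"
  by (simp add: Off_def double_sphere_def lee_sphere1_def)

lemma zv_Off: "zv \<in> Off" by (rule in_Off1) (simp add: lee_dist_def zv_def)
lemma ee_Off: "ee i \<in> Off" by (rule in_Off1) (simp add: lee_dist_def zv_def ee_def sum_uv)
lemma nee_Off: "(\<lambda>j. - ee i j) \<in> Off" by (rule in_Off1) (simp add: lee_dist_def zv_def ee_def sum_uv)
lemma pee_Off: "vadd (ee i0) (ee i) \<in> Off" by (rule in_Off2) (simp add: lee_dist_def vadd_def ee_def sum_uv)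
lemma mee_Off: "(\<lambda>j. ee i0 j - ee i j) \<in> Off" by (rule in_Off2) (simp add: lee_dist_def ee_def sum_uv)
lemma del_Off: "del \<in> Off" unfolding del_def by (rule pee_Off)
lemma ld_zv_ee: "lee_dist zv (ee i) = 1" by (simp add: lee_dist_def zv_def ee_def sum_uv)

lemma Off_diam: assumes "x \<in> Off" "y \<in> Off" shows "lee_dist x y \<le> 3"
proof -
  have d1: "lee_dist zv (ee i0) = 1" by (rule ld_zv_ee)
  have A: "lee_dist zv x \<le> 1 \<or> lee_dist (ee i0) x \<le> 1" using assms(1)
    by (simp add: Off_def double_sphere_def lee_sphere1_def)
  have B: "lee_dist zv y \<le> 1 \<or> lee_dist (ee i0) y \<le> 1" using assms(2)
    by (simp add: Off_def double_sphere_def lee_sphere1_def)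
  have s1: "lee_dist x zv = lee_dist zv x" by (rule ld_sym)
  have s2: "lee_dist x (ee i0) = lee_dist (ee i0) x" by (rule ld_sym)
  have s3: "lee_dist (ee i0) zv = 1" using d1 ld_sym by metis
  from A show ?thesis
  proof
    assume xa: "lee_dist zv x \<le> 1"
    from B show ?thesis
    proof
      assume "lee_dist zv y \<le> 1"
      then show ?thesis using ld_tri[of x y zv] xa s1 by linarith
    next
      assume yb: "lee_dist (ee i0) y \<le> 1"
      have "lee_dist x y \<le> lee_dist x zv + lee_dist zv y" by (rule ld_tri)
      moreover have "lee_dist zv y \<le> lee_dist zv (ee i0) + lee_dist (ee i0) y" by (rule ld_tri)
      ultimately show ?thesis using xa yb s1 d1 by linarith
    qed
  next
    assume xb: "lee_dist (ee i0) x \<le> 1"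
    from B show ?thesis
    proof
      assume ya: "lee_dist zv y \<le> 1"
      have "lee_dist x y \<le> lee_dist x (ee i0) + lee_dist (ee i0) y" by (rule ld_tri)
      moreover have "lee_dist (ee i0) y \<le> lee_dist (ee i0) zv + lee_dist zv y" by (rule ld_tri)
      ultimately show ?thesis using xb ya s2 s3 by linarith
    next
      assume "lee_dist (ee i0) y \<le> 1"
      then show ?thesis using ld_tri[of x y "ee i0"] xb s2 by linarith
    qed
  qed
qed

lemma decomp:
  assumes "lat v" "lat w" "o1 \<in> Off" "o2 \<in> Off" "vadd v o1 = vadd w o2"
  shows "v = w \<and> o1 = o2"
proof -
  have pj: "v j + o1 j = w j + o2 j" for j
  proof -
    have "vadd v o1 j = vadd w o2 j" using assms(5) by simp
    then show ?thesis by (simp add: vadd_def)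
  qed
  have eq: "(\<lambda>j. o1 j - o2 j) = (\<lambda>j. w j - v j)"
  proof
    fix j show "o1 j - o2 j = w j - v j" using pj[of j] by simp
  qed
  have "(4 * int N) dvd dot (\<lambda>j. o1 j - o2 j)"
    unfolding eq dot_diff using assms(1,2) by (simp add: lat_def)
  moreover have "nrm (\<lambda>j. o1 j - o2 j) \<le> 3" using Off_diam[OF assms(3,4)] by (simp add: ld_nrm)
  ultimately have z: "(\<lambda>j. o1 j - o2 j) = (\<lambda>_. 0)" by (rule lemma_min)
  have "o1 j = o2 j" for j
  proof -
    have "o1 j - o2 j = 0" using fun_cong[OF z, of j] by simp
    then show ?thesis by simp
  qed
  then have o: "o1 = o2" by (simp add: fun_eq_iff)
  have "v j = w j" for j using pj[of j] o by simp
  then have "v = w" by (simp add: fun_eq_iff)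
  with o show ?thesis by simp
qed

lemma get_i: assumes "0 \<le> q" "q < int N" obtains i where "int (pos i) = q"
proof -
  have "nat q < N" using assms by linarith
  then obtain i where "pos i = nat q" using pos_surj by blast
  then have "int (pos i) = q" using assms by simp
  then show ?thesis by (rule that)
qed

lemma hit:
  assumes t0: "0 \<le> t" and tM: "t < 4 * int N"
  shows "\<exists>u\<in>Off. dot u = t \<or> dot u = t - 4 * int N"
proof -
  have ci0: "cc i0 = 1" using pos_i0 by (simp add: cc_def)
  consider "t = 0" | "odd t" "t < 2 * int N" | "odd t" "t > 2 * int N"
    | "even t" "t \<noteq> 0" "t \<le> 2 * int N" | "even t" "t > 2 * int N"
  proof -
    have par: "odd t \<Longrightarrow> t \<noteq> 2 * int N" by auto
    show ?thesis using par that by (cases "even t"; cases "t = 0"; cases "t < 2*int N"; cases "t \<le> 2*int N") auto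
  qed
  then show ?thesis
  proof cases
    case 1 then show ?thesis using zv_Off dot_zv by auto
  next
    case 2
    then obtain k where k: "t = 2 * k + 1" by (meson oddE)
    have "0 \<le> k" "k < int N" using 2 t0 tM k by linarith+
    then obtain i where i: "int (pos i) = k" by (rule get_i)
    have "dot (ee i) = t" using i k by (simp add: dot_ee cc_def)
    then show ?thesis using ee_Off by blast
  next
    case 3
    then obtain k where k: "t = 2 * k + 1" by (meson oddE)
    have "0 \<le> 2 * int N - 1 - k" "2 * int N - 1 - k < int N" using 3 t0 tM k by linarith+
    then obtain i where i: "int (pos i) = 2 * int N - 1 - k" by (rule get_i)
    have "dot (\<lambda>j. - ee i j) = t - 4 * int N" using i k by (simp add: dot_neg dot_ee cc_def)
    then show ?thesis using nee_Off by blast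
  next
    case 4
    then obtain k where k: "t = 2 * k" by (meson evenE)
    have "0 \<le> k - 1" "k - 1 < int N" using 4 t0 tM k by linarith+
    then obtain i where i: "int (pos i) = k - 1" by (rule get_i)
    have "dot (vadd (ee i0) (ee i)) = t" using i k ci0 by (simp add: dot_add dot_ee cc_def)
    then show ?thesis using pee_Off by blast
  next
    case 5
    then obtain k where k: "t = 2 * k" by (meson evenE)
    have "0 \<le> 2 * int N - k" "2 * int N - k < int N" using 5 t0 tM k by linarith+
    then obtain i where i: "int (pos i) = 2 * int N - k" by (rule get_i)
    have "dot (\<lambda>j. ee i0 j - ee i j) = t - 4 * int N" using i k ci0 by (simp add: dot_diff dot_ee cc_def)
    then show ?thesis using mee_Off by blast
  qed
qed

lemma cover: "\<exists>u\<in>Off. lat (\<lambda>j. x j - u j)"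
proof -
  define M where "M = 4 * int N"
  have Mp: "M > 0" using N2 by (simp add: M_def)
  define t where "t = dot x mod M"
  have "0 \<le> t" "t < M" using Mp by (auto simp: t_def)
  then obtain u where o: "u \<in> Off" "dot u = t \<or> dot u = t - M" using hit unfolding M_def by blast
  have "M dvd (dot x - t)" by (simp add: t_def dvd_minus_mod)
  moreover have "M dvd (t - dot u)" using o(2) by auto
  ultimately have "M dvd ((dot x - t) + (t - dot u))" by (rule dvd_add)
  then have "M dvd (dot x - dot u)" by simp
  then show ?thesis using o(1) by (auto simp: lat_def dot_diff M_def)
qed

definition tiles :: "('n \<Rightarrow> int) set set" where "tiles = {tile v | v. lat v}"
definition sig :: "nat set \<Rightarrow> int \<Rightarrow> bool" where
  "sig A m \<longleftrightarrow> m = 0 \<or> (\<exists>a\<in>A. m = 4 * int N * (int a + 1))"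
definition cw :: "nat set \<Rightarrow> ('n \<Rightarrow> int) \<Rightarrow> ('n \<Rightarrow> int)" where
  "cw A v = (if sig A (ldot v) then del else zv)"
definition code :: "nat set \<Rightarrow> ('n \<Rightarrow> int) set" where
  "code A = {vadd v (cw A v) | v. lat v}"

lemma vadd_comm: "vadd x y = vadd y x" by (simp add: vadd_def add.commute)

lemma tile_iff: "x \<in> tile v \<longleftrightarrow> (\<exists>u\<in>Off. x = vadd v u)"
  by (auto simp: tile_def vadd_comm)

lemma iso: "lee_isometry (\<lambda>x. vadd x v)"
proof -
  have "inj (\<lambda>x. vadd x v)"
    by (rule injI) (auto simp: vadd_def fun_eq_iff)
  moreover have "surj (\<lambda>x. vadd x v)"
  proof (rule surjI)
    fix x show "vadd (\<lambda>j. x j - v j) v = x" by (simp add: vadd_def)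
  qed
  ultimately show ?thesis unfolding lee_isometry_def bij_def by (simp add: lee_dist_def vadd_def)
qed

lemma tile_copy: "ds_copy (tile v)"
  unfolding ds_copy_def
  by (rule exI[of _ "\<lambda>x. vadd x v"], rule exI[of _ zv], rule exI[of _ "ee i0"])
     (simp add: iso ld_zv_ee tile_def Off_def)

lemma tile_disj:
  assumes "lat v" "lat w" "x \<in> tile v" "x \<in> tile w" shows "v = w"
proof -
  obtain u1 where "u1 \<in> Off" "x = vadd v u1" using assms(3) tile_iff by blast
  moreover obtain u2 where "u2 \<in> Off" "x = vadd w u2" using assms(4) tile_iff by blast
  ultimately show ?thesis using decomp[OF assms(1,2)] by metis
qed

lemma tiling: "ds_tiling tiles"
  unfolding ds_tiling_def
proof (intro conjI ballI impI)
  fix T assume "T \<in> tiles" then show "ds_copy T" using tile_copy by (auto simp: tiles_def)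
next
  fix T1 T2 assume "T1 \<in> tiles" "T2 \<in> tiles" "T1 \<noteq> T2"
  then show "T1 \<inter> T2 = {}" using tile_disj by (auto simp: tiles_def)
next
  show "\<Union>tiles = UNIV"
  proof (rule set_eqI, rule iffI)
    fix x :: "'n \<Rightarrow> int"
    obtain u where u: "u \<in> Off" "lat (\<lambda>j. x j - u j)" using cover by blast
    have "x = vadd (\<lambda>j. x j - u j) u" by (simp add: vadd_def)
    then have "x \<in> tile (\<lambda>j. x j - u j)" using u(1) tile_iff by blast
    then show "x \<in> \<Union>tiles" using u(2) by (auto simp: tiles_def)
  qed simp
qed

lemma cw_Off: "cw A v \<in> Off" by (simp add: cw_def del_Off zv_Off)
lemma dot_cw: "4 dvd dot (cw A v)" by (simp add: cw_def dot_del dot_zv)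
lemma ldot_cw: "ldot (cw A v) = 0" by (simp add: cw_def ldot_del ldot_zv)

lemma lat4: "lat v \<Longrightarrow> 4 dvd dot v"
  unfolding lat_def by (metis dvd_mult_left mult.commute)

lemma code_dist:
  assumes v: "lat v" and w: "lat w" and ne: "vadd v (cw A v) \<noteq> vadd w (cw A w)"
  shows "lee_dist (vadd v (cw A v)) (vadd w (cw A w)) \<ge> 4"
proof (rule ccontr)
  define x where "x = vadd v (cw A v)"
  define y where "y = vadd w (cw A w)"
  define z where "z = (\<lambda>j. x j - y j)"
  assume "\<not> ?thesis"
  then have n3: "nrm z \<le> 3" by (simp add: ld_nrm z_def x_def y_def)
  have dz: "dot z = (dot v - dot w) + (dot (cw A v) - dot (cw A w))"
    by (simp add: z_def x_def y_def dot_diff dot_add)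
  have "4 dvd dot z" unfolding dz using lat4[OF v] lat4[OF w] dot_cw[of A v] dot_cw[of A w] by simp
  then have "ldot z = 0" using n3 by (intro lemma_l)
  moreover have "ldot z = ldot v - ldot w"
    by (simp add: z_def x_def y_def ldot_diff ldot_add ldot_cw)
  ultimately have "ldot v = ldot w" by simp
  then have c: "cw A v = cw A w" by (simp add: cw_def)
  have zz: "z = (\<lambda>j. v j - w j)" by (simp add: z_def x_def y_def vadd_def c)
  have "(4 * int N) dvd dot z" unfolding zz dot_diff using v w by (simp add: lat_def)
  then have "z = (\<lambda>_. 0)" using n3 by (rule lemma_min)
  then have "x = y" by (simp add: z_def fun_eq_iff)
  then show False using ne by (simp add: x_def y_def)
qed

lemma code_perfect: "diam4_perfect_lee_code (code A)"
  unfolding diam4_perfect_lee_code_def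
proof (intro conjI ballI impI)
  fix x y assume "x \<in> code A" "y \<in> code A" "x \<noteq> y"
  then show "4 \<le> lee_dist x y" using code_dist by (auto simp: code_def)
next
  show "\<exists>\<T>. ds_tiling \<T> \<and> (\<forall>T\<in>\<T>. \<exists>!c. c \<in> code A \<and> c \<in> T) \<and>
     (\<forall>T1\<in>\<T>. \<forall>T2\<in>\<T>. \<forall>c1 c2. T1 \<noteq> T2 \<and> c1 \<in> code A \<inter> T1 \<and> c2 \<in> code A \<inter> T2 \<longrightarrow> c1 \<noteq> c2)"
  proof (intro exI conjI ballI allI impI)
    show "ds_tiling tiles" by (rule tiling)
  next
    fix T assume "T \<in> tiles"
    then obtain v where T: "T = tile v" and v: "lat v" by (auto simp: tiles_def)
    show "\<exists>!c. c \<in> code A \<and> c \<in> T"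
    proof (rule ex1I[of _ "vadd v (cw A v)"])
      show "vadd v (cw A v) \<in> code A \<and> vadd v (cw A v) \<in> T"
        using v cw_Off tile_iff T by (auto simp: code_def)
    next
      fix c assume "c \<in> code A \<and> c \<in> T"
      then obtain w u where w: "lat w" "c = vadd w (cw A w)" and u: "u \<in> Off" "c = vadd v u"
        using T tile_iff by (auto simp: code_def)
      then have "w = v" using decomp[OF w(1) v cw_Off u(1)] by simp
      then show "c = vadd v (cw A v)" using w by simp
    qed
  next
    fix T1 T2 c1 c2
    assume a: "T1 \<in> tiles" "T2 \<in> tiles" "T1 \<noteq> T2 \<and> c1 \<in> code A \<inter> T1 \<and> c2 \<in> code A \<inter> T2"
    have "T1 \<inter> T2 = {}" using tiling a unfolding ds_tiling_def by blast
    then show "c1 \<noteq> c2" using a by auto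
  qed
qed

lemma dot_smul: "dot (\<lambda>j. k * x j) = k * dot x"
  by (simp add: dot_def sum_distrib_left algebra_simps)
lemma ldot_smul: "ldot (\<lambda>j. k * x j) = k * ldot x"
  by (simp add: ldot_def sum_distrib_left algebra_simps)
lemma ci0: "cc i0 = 1" using pos_i0 by (simp add: cc_def)
lemma li0: "ll i0 = 1" using pos_i0 by (simp add: ll_def)

lemma zv_notin: "zv \<notin> code A"
proof
  assume "zv \<in> code A"
  then obtain v where v: "lat v" "zv = vadd v (cw A v)" by (auto simp: code_def)
  have lz: "lat zv" by (simp add: lat_def dot_zv)
  have zz: "vadd zv zv = zv" by (simp add: vadd_def zv_def)
  have "vadd v (cw A v) = vadd zv zv" using v(2) zz by metis
  then have "v = zv \<and> cw A v = zv" using decomp[OF v(1) lz cw_Off zv_Off] by simp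
  moreover have "cw A zv = del" by (simp add: cw_def ldot_zv sig_def)
  ultimately show False using del_nz by metis
qed

lemma code_nonper: "\<not> periodic_set (code A)"
proof
  assume "periodic_set (code A)"
  then obtain p :: int where p: "p > 0" and H: "\<And>s i. s \<in> code A \<longleftrightarrow> (\<lambda>j. s j + p * unit_vec i j) \<in> code A"
    unfolding periodic_set_def by blast
  define x0 where "x0 = (\<lambda>j. (- (4 * int N * p)) * ee i0 j)"
  have lx0: "lat x0" unfolding x0_def lat_def dot_smul dot_ee ci0 by simp
  have "ldot x0 = - (4 * int N * p)" unfolding x0_def ldot_smul ldot_ee li0 by simp
  then have neg: "ldot x0 < 0" using p N2 by simp
  have "\<not> sig A (ldot x0)"
  proof
    assume "sig A (ldot x0)"
    then obtain a where "ldot x0 = 4 * int N * (int a + 1)" using neg by (auto simp: sig_def)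
    moreover have "4 * int N * (int a + 1) > 0" using N2 by simp
    ultimately show False using neg by simp
  qed
  then have "cw A x0 = zv" by (simp add: cw_def)
  then have "vadd x0 (cw A x0) = x0" by (simp add: vadd_def zv_def)
  then have x0in: "x0 \<in> code A" using lx0 unfolding code_def by (metis (mono_tags, lifting) mem_Collect_eq)
  have step: "(\<lambda>j. x0 j + int k * p * unit_vec i0 j) \<in> code A" for k
  proof (induction k)
    case 0 then show ?case using x0in by simp
  next
    case (Suc k)
    have "(\<lambda>j. (x0 j + int k * p * unit_vec i0 j) + p * unit_vec i0 j) \<in> code A"
      using iffD1[OF H[of "\<lambda>j. x0 j + int k * p * unit_vec i0 j" i0] Suc.IH] by simp
    moreover have "(\<lambda>j. (x0 j + int k * p * unit_vec i0 j) + p * unit_vec i0 j)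
        = (\<lambda>j. x0 j + int (Suc k) * p * unit_vec i0 j)" by (rule ext) (simp add: algebra_simps)
    ultimately show ?case by simp
  qed
  have "(\<lambda>j. x0 j + int (4 * N) * p * unit_vec i0 j) = zv"
    by (rule ext) (simp add: x0_def ee_def zv_def unit_vec_def)
  then show False using step[of "4 * N"] zv_notin by simp
qed

lemma code_neq: assumes "a \<in> A" "a \<notin> B" shows "code A \<noteq> code B"
proof
  assume eq: "code A = code B"
  define m where "m = 4 * int N * (int a + 1)"
  define v where "v = (\<lambda>j. m * ee i0 j)"
  have lv: "lat v" unfolding v_def lat_def dot_smul dot_ee ci0 m_def by simp
  have lm: "ldot v = m" unfolding v_def ldot_smul ldot_ee li0 by simp
  have "sig A m" using assms(1) by (auto simp: sig_def m_def)
  then have "cw A v = del" by (simp add: cw_def lm)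
  then have "vadd v del \<in> code A" using lv unfolding code_def by (metis (mono_tags, lifting) mem_Collect_eq)
  then have "vadd v del \<in> code B" using eq by simp
  then obtain w where w: "lat w" "vadd v del = vadd w (cw B w)" by (auto simp: code_def)
  then have "v = w \<and> del = cw B w" using decomp[OF lv w(1) del_Off cw_Off] by simp
  then have "cw B v = del" by simp
  then have "sig B m" using del_nz lm by (auto simp: cw_def split: if_splits)
  moreover have "m \<noteq> 0" using N2 by (simp add: m_def)
  ultimately obtain b where b: "b \<in> B" "m = 4 * int N * (int b + 1)" by (auto simp: sig_def)
  then have "int a + 1 = int b + 1" using b N2 by (simp add: m_def)
  then have "a = b" by simp
  then show False using assms b by simp
qed

lemma code_inj: "inj code"
proof (rule injI)
  fix A B assume "code A = code B"
  then show "A = B" using code_neq by blast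
qed

lemma main: "{L :: ('n \<Rightarrow> int) set. diam4_perfect_lee_code L \<and> \<not> periodic_set L} \<approx> (UNIV :: nat set set)"
proof (rule lepoll_antisym)
  show "{L :: ('n \<Rightarrow> int) set. diam4_perfect_lee_code L \<and> \<not> periodic_set L} \<lesssim> (UNIV :: nat set set)"
    unfolding lepoll_def
    by (rule exI[of _ "\<lambda>L. to_nat ` L"]) (auto simp: inj_on_def inj_image_eq_iff[OF inj_to_nat])
  show "(UNIV :: nat set set) \<lesssim> {L :: ('n \<Rightarrow> int) set. diam4_perfect_lee_code L \<and> \<not> periodic_set L}"
    unfolding lepoll_def
    by (rule exI[of _ code]) (auto simp: code_inj code_perfect code_nonper)
qed

end

theorem corollary2:
  assumes "card (UNIV :: 'n::finite set) \<ge> 2"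
  shows "{L :: ('n \<Rightarrow> int) set. diam4_perfect_lee_code L \<and> \<not> periodic_set L}
           \<approx> (UNIV :: nat set set)"
proof -
  obtain h :: "'n \<Rightarrow> nat" where "bij_betw h UNIV {0..<card (UNIV :: 'n set)}"
    using ex_bij_betw_finite_nat[OF finite_UNIV] by blast
  then interpret leeset h "card (UNIV :: 'n set)" using assms by unfold_locales
  show ?thesis by (rule main)
qed

end
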